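(* Let $n\ge1$, $s\in(0,1)$ with $n/s\ge2$, $\Omega\subset\mathbb R^n$ a bounded Lipschitz domain, $\mu\in(0,n)$, $M$ satisfying (M1)–(M3) and $g$ satisfying (g1)–(g4). Then any nontrivial weak solution $u\in X_0\setminus\{0\}$ of $$-M(\|u\|^{n/s})(-\Delta)^s_{n/s}u=\left(\int_\Omega\frac{G(y,u)}{|x-y|^\mu}dy\right)g(x,u)\ \text{in }\Omega,\quad u=0\ \text{in }\mathbb R^n\setminus\Omega$$ is nonnegative, i.e. $u\ge0$ a.e. in $\Omega$.
   Context: $X_0=\{u\in W^{s,n/s}(\mathbb R^n): u=0 \text{ in } \mathbb R^n\setminus\Omega\}$ with norm $\|u\|=\left(\int_{\mathbb R^n}\int_{\mathbb R^n}\frac{|u(x)-u(y)|^{n/s}}{|x-y|^{2n}}dxdy\right)^{s/n}$. A weak solution is $u\in X_0$ with $M(\|u\|^{n/s})\int_{\mathbb R^{2n}}\frac{|u(x)-u(y)|^{\frac ns-2}(u(x)-u(y))(\phi(x)-\phi(y))}{|x-y|^{2n}}dxdy=\int_\Omega\left(\int_\Omega\frac{G(y,u)}{|x-y|^\mu}dy\right)g(x,u)\phi\,dx$ for all $\phi\in X_0$. $M:\mathbb R^+\to\mathbb R^+$ continuous, $\hat M(t)=\int_0^tM$; $g(x,t)=h(x,t)\exp(|t|^{\frac n{n-s}})$ continuous, $G(x,t)=\int_0^tg(x,\tau)d\tau$. (M1) $\hat M(t+s)\ge\hat M(t)+\hat M(s)$. (M2) There is $\gamma>1$ with $M(t)/t^{\gamma-1}$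 nonincreasing for $t>0$. (M3) For each $b>0$ there is $\kappa(b)>0$ with $M(t)\ge\kappa$ for $t\ge b$. (g1) $h\in C^1(\overline\Omega\times\mathbb R)$, $h=0$ for $t\le0$, $h>0$ for $t>0$. (g2) For every $\varepsilon>0$, $\lim_{t\to\infty}\sup_xh(x,t)e^{-\varepsilon|t|^{\frac n{n-s}}}=0$, $\lim_{t\to\infty}\inf_xh(x,t)e^{\varepsilon|t|^{\frac n{n-s}}}=\infty$. (g3) There are positive $t_0,T_0,\gamma_0$ with $0<t^{\gamma_0}G(x,t)\le T_0g(x,t)$ on $\Omega\times[t_0,\infty)$. (g4) There is $l>\frac{\gamma n}{2s}-1$ with $g(x,t)/t^l$ increasing in $t>0$ uniformly in $x$. *)

theory Defs
  imports "HOL-Analysis.Analysis"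
begin

abbreviation dimR :: "'a::euclidean_space itself \<Rightarrow> real" where
  "dimR _ \<equiv> real DIM('a)"

definition frac_sobolev :: "real \<Rightarrow> real \<Rightarrow> ('a::euclidean_space \<Rightarrow> real) set" where
  "frac_sobolev s p = {u. u \<in> borel_measurable lebesgue \<and>
     (\<integral>\<^sup>+ x. ennreal (\<bar>u x\<bar> powr p) \<partial>lebesgue) < \<infinity> \<and>
     (\<integral>\<^sup>+ x. \<integral>\<^sup>+ y. ennreal (\<bar>u x - u y\<bar> powr p / norm (x - y) powr (real DIM('a) + s * p))
         \<partial>lebesgue \<partial>lebesgue) < \<infinity>}"

definition X0 :: "real \<Rightarrow> 'a::euclidean_space set \<Rightarrow> ('a \<Rightarrow> real) set" where
  "X0 s \<Omega> = {u \<in> frac_sobolev s (real DIM('a) / s). AE x in lebesgue. x \<notin> \<Omega> \<longrightarrow> u x = 0}"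

definition X0_norm :: "real \<Rightarrow> ('a::euclidean_space \<Rightarrow> real) \<Rightarrow> real" where
  "X0_norm s u = (enn2real (\<integral>\<^sup>+ x. \<integral>\<^sup>+ y.
       ennreal (\<bar>u x - u y\<bar> powr (real DIM('a) / s) / norm (x - y) powr (2 * real DIM('a)))
       \<partial>lebesgue \<partial>lebesgue)) powr (s / real DIM('a))"

definition weak_solution ::
  "real \<Rightarrow> real \<Rightarrow> (real \<Rightarrow> real) \<Rightarrow> ('a::euclidean_space \<Rightarrow> real \<Rightarrow> real) \<Rightarrow>
   ('a \<Rightarrow> real \<Rightarrow> real) \<Rightarrow> 'a set \<Rightarrow> ('a \<Rightarrow> real) \<Rightarrow> bool" where
  "weak_solution s \<mu> M g G \<Omega> u \<longleftrightarrow> u \<in> X0 s \<Omega> \<and>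
     (\<forall>\<phi>\<in>X0 s \<Omega>.
        M ((X0_norm s u) powr (real DIM('a) / s)) *
          (\<integral> z. (case z of (x, y) \<Rightarrow>
               \<bar>u x - u y\<bar> powr (real DIM('a) / s - 2) * (u x - u y) * (\<phi> x - \<phi> y)
                 / norm (x - y) powr (2 * real DIM('a))) \<partial>(lebesgue \<Otimes>\<^sub>M lebesgue))
        = (\<integral> x \<in> \<Omega>. (\<integral> y \<in> \<Omega>. G y (u y) / norm (x - y) powr \<mu> \<partial>lebesgue) * g x (u x) * \<phi> x
             \<partial>lebesgue))"

text \<open>Bounded Lipschitz domain: open, connected, nonempty, and near every boundary point
  the set is (after choosing a unit direction e) the subgraph of a Lipschitz function
  of the variables orthogonal to e.\<close>
definition lipschitz_domain :: "'a::euclidean_space set \<Rightarrow> bool" where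
  "lipschitz_domain \<Omega> \<longleftrightarrow> open \<Omega> \<and> connected \<Omega> \<and> \<Omega> \<noteq> {} \<and>
     (\<forall>x\<in>frontier \<Omega>. \<exists>r>0. \<exists>e. norm e = 1 \<and>
        (\<exists>\<phi> L. (\<forall>y z. \<bar>\<phi> y - \<phi> z\<bar> \<le> L * norm (y - z)) \<and>
               (\<forall>y. \<phi> y = \<phi> (y - (y \<bullet> e) *\<^sub>R e)) \<and>
               \<Omega> \<inter> ball x r = {y \<in> ball x r. y \<bullet> e < \<phi> y}))"

definition C1_on :: "('b::real_normed_vector \<Rightarrow> real) \<Rightarrow> 'b set \<Rightarrow> bool" where
  "C1_on f S \<longleftrightarrow> (\<exists>D :: 'b \<Rightarrow> ('b \<Rightarrow>\<^sub>L real). continuous_on S D \<and>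
      (\<forall>z\<in>S. (f has_derivative blinfun_apply (D z)) (at z within S)))"

end

theory Submission
  imports Defs
begin

lemma sf_lebesgue: "sigma_finite_measure (lebesgue :: 'a::euclidean_space measure)"
  unfolding sigma_finite_measure_def
proof (rule exI[of _ "range (\<lambda>n::nat. cball (0::'a) (real n))"], intro conjI)
  show "countable (range (\<lambda>n::nat. cball (0::'a) (real n)))" by simp
  show "range (\<lambda>n::nat. cball (0::'a) (real n)) \<subseteq> sets lebesgue" by auto
  show "\<Union>(range (\<lambda>n::nat. cball (0::'a) (real n))) = space lebesgue"
    by (auto simp: real_arch_simple)
  show "\<forall>a\<in>range (\<lambda>n::nat. cball (0::'a) (real n)). emeasure lebesgue a \<noteq> \<infinity>"
  proof (intro ballI)
    fix a assume "a \<in> range (\<lambda>n::nat. cball (0::'a) (real n))"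
    then obtain n where "a = cball (0::'a) (real n)" by auto
    then show "emeasure lebesgue a \<noteq> \<infinity>"
      using emeasure_lborel_cball_finite[of "0::'a" "real n"] by simp
  qed
qed

lemma id_lebesgue: "(\<lambda>x. x) \<in> borel_measurable (lebesgue :: 'a::euclidean_space measure)"
  by (rule measurable_completion) simp

lemma AE_neq_lebesgue: "AE y in (lebesgue :: 'a::euclidean_space measure). y \<noteq> x"
proof -
  have "AE y in (lborel :: 'a measure). y \<notin> {x}"
    by (rule AE_not_in[OF countable_imp_null_set_lborel]) simp
  then have "AE y in (lborel :: 'a measure). y \<noteq> x" by simp
  then show ?thesis by (rule AE_completion)
qed

lemma const_zero:
  fixes f :: "'a::euclidean_space \<Rightarrow> real" and \<Omega> :: "'a set"
  assumes c: "AE x in lebesgue. AE y in lebesgue. f x = f y"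
    and z: "AE x in lebesgue. x \<notin> \<Omega> \<longrightarrow> f x = 0" and b: "bounded \<Omega>"
  shows "AE x in lebesgue. f x = 0"
proof -
  have "\<exists>x. AE y in lebesgue. f x = f y"
  proof (rule ccontr)
    assume "\<not> ?thesis"
    then have "AE x in (lebesgue::'a measure). False" using c by (metis (mono_tags, lifting) eventually_mono)
    then have "emeasure lebesgue (space (lebesgue::'a measure)) = 0" using ae_filter_eq_bot_iff trivial_limit_def by metis
    then show False by simp
  qed
  then obtain x0 where x0: "AE y in lebesgue. f x0 = f y" by blast
  obtain r where r: "\<forall>x\<in>\<Omega>. norm x \<le> r" using b unfolding bounded_pos by blast
  have "f x0 = 0"
  proof (rule ccontr)
    assume ne: "f x0 \<noteq> 0"
    have "AE y in (lebesgue::'a measure). y \<in> cball (0::'a) r \<longleftrightarrow> y \<in> UNIV"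
      using x0 z
    proof eventually_elim
      case (elim y)
      then have "y \<in> \<Omega>" using ne by auto
      then show ?case using r by (simp add: mem_cball_0)
    qed
    then have "emeasure lebesgue (cball (0::'a) r) = emeasure (lebesgue::'a measure) UNIV"
      by (rule emeasure_eq_AE) auto
    then show False using emeasure_lborel_cball_finite[of "0::'a" r] by simp
  qed
  then show ?thesis using x0 by (simp add: eventually_mono)
qed

lemma minpt:
  fixes a1 a2 :: real
  shows "\<bar>min a1 0 - min a2 0\<bar> \<le> \<bar>a1 - a2\<bar>"
    and "(a1 - a2) * (min a1 0 - min a2 0) \<ge> 0"
    and "min a1 0 \<noteq> min a2 0 \<Longrightarrow> (a1 - a2) * (min a1 0 - min a2 0) > 0"
proof -
  show "\<bar>min a1 0 - min a2 0\<bar> \<le> \<bar>a1 - a2\<bar>" by (simp add: min_def)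
  show "(a1 - a2) * (min a1 0 - min a2 0) \<ge> 0"
  proof (cases "a1 \<le> a2")
    case True
    then have "min a1 0 - min a2 0 \<le> 0" by (simp add: min_def)
    then show ?thesis using True by (simp add: mult_nonpos_nonpos)
  next
    case False
    then have "min a1 0 - min a2 0 \<ge> 0" by (simp add: min_def)
    then show ?thesis using False by simp
  qed
  show "min a1 0 \<noteq> min a2 0 \<Longrightarrow> (a1 - a2) * (min a1 0 - min a2 0) > 0"
  proof -
    assume ne: "min a1 0 \<noteq> min a2 0"
    show ?thesis
    proof (cases "a1 < a2")
      case True
      then have "min a1 0 - min a2 0 < 0" using ne by (auto simp: min_def split: if_splits)
      then show ?thesis using True by (simp add: mult_neg_neg)
    next
      case False
      then have "min a1 0 - min a2 0 > 0" using ne by (auto simp: min_def split: if_splits)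
      then show ?thesis using False ne by simp
    qed
  qed
qed

lemma F_meas_lemma:
  fixes u :: "'a::euclidean_space \<Rightarrow> real"
  assumes [measurable]: "u \<in> borel_measurable lebesgue"
  shows "(\<lambda>z. case z of (x, y) \<Rightarrow>
      \<bar>u x - u y\<bar> powr q * (u x - u y) * (min (u x) 0 - min (u y) 0)
        / norm (x - y) powr c) \<in> borel_measurable (lebesgue \<Otimes>\<^sub>M lebesgue)"
proof -
  note id_lebesgue[measurable]
  show ?thesis by measurable
qed

lemma K_meas_lemma:
  fixes u :: "'a::euclidean_space \<Rightarrow> real"
  assumes [measurable]: "u \<in> borel_measurable lebesgue"
  shows "(\<lambda>(x, y). \<bar>u x - u y\<bar> powr p / norm (x - y) powr c) \<in> borel_measurable (lebesgue \<Otimes>\<^sub>M lebesgue)"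
proof -
  note id_lebesgue[measurable]
  show ?thesis by measurable
qed

lemma Fpt:
  fixes a1 a2 q D :: real
  assumes q: "q \<ge> 0" and D: "D \<ge> 0"
  shows "\<bar>a1 - a2\<bar> powr q * (a1 - a2) * (min a1 0 - min a2 0) / D \<ge> 0"
    and "\<bar>\<bar>a1 - a2\<bar> powr q * (a1 - a2) * (min a1 0 - min a2 0) / D\<bar> \<le> \<bar>a1 - a2\<bar> powr (q + 2) / D"
    and "D > 0 \<Longrightarrow> min a1 0 \<noteq> min a2 0 \<Longrightarrow> \<bar>a1 - a2\<bar> powr q * (a1 - a2) * (min a1 0 - min a2 0) / D > 0"
proof -
  define a where "a = a1 - a2"
  define b where "b = min a1 0 - min a2 0"
  have ab: "a * b \<ge> 0" using minpt(2)[of a1 a2] by (simp add: a_def b_def)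
  have ba: "\<bar>b\<bar> \<le> \<bar>a\<bar>" using minpt(1)[of a1 a2] by (simp add: a_def b_def)
  show "\<bar>a1 - a2\<bar> powr q * (a1 - a2) * (min a1 0 - min a2 0) / D \<ge> 0"
    unfolding a_def[symmetric] b_def[symmetric] mult.assoc
    using ab D by simp
  have "\<bar>\<bar>a\<bar> powr q * a * b / D\<bar> \<le> \<bar>a\<bar> powr (q + 2) / D"
  proof (cases "a = 0")
    case True then show ?thesis by simp
  next
    case False
    have e: "\<bar>a\<bar> powr (q + 2) = \<bar>a\<bar> powr q * \<bar>a\<bar> * \<bar>a\<bar>"
      using False by (simp add: powr_add power2_eq_square powr_numeral)
    have "\<bar>\<bar>a\<bar> powr q * a * b / D\<bar> = \<bar>a\<bar> powr q * \<bar>a\<bar> * \<bar>b\<bar> / D"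
      using D by (simp add: abs_mult)
    also have "\<dots> \<le> \<bar>a\<bar> powr q * \<bar>a\<bar> * \<bar>a\<bar> / D"
      using D ba by (intro divide_right_mono mult_left_mono) auto
    finally show ?thesis using e by simp
  qed
  then show "\<bar>\<bar>a1 - a2\<bar> powr q * (a1 - a2) * (min a1 0 - min a2 0) / D\<bar> \<le> \<bar>a1 - a2\<bar> powr (q + 2) / D"
    by (simp add: a_def b_def)
  assume Dp: "D > 0" and ne: "min a1 0 \<noteq> min a2 0"
  have abp: "a * b > 0" using minpt(3)[OF ne] by (simp add: a_def b_def)
  then have "a \<noteq> 0" by auto
  then have "\<bar>a\<bar> powr q > 0" by simp
  then show "\<bar>a1 - a2\<bar> powr q * (a1 - a2) * (min a1 0 - min a2 0) / D > 0"
    unfolding a_def[symmetric] b_def[symmetric] mult.assoc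
    using abp Dp by simp
qed

theorem lemma3p9:
  fixes \<Omega> :: "'a::euclidean_space set" and s \<mu> \<gamma> :: real
    and M :: "real \<Rightarrow> real" and h :: "'a \<Rightarrow> real \<Rightarrow> real" and u :: "'a \<Rightarrow> real"
  defines "n \<equiv> real DIM('a)"
  defines "g \<equiv> (\<lambda>x t. h x t * exp (\<bar>t\<bar> powr (n / (n - s))))"
  defines "G \<equiv> (\<lambda>x t. LBINT \<tau>=0..t. g x \<tau>)"
  defines "Mhat \<equiv> (\<lambda>t. integral {0..t} M)"
  assumes s: "0 < s" "s < 1" "n / s \<ge> 2"
    and dom: "bounded \<Omega>" "lipschitz_domain \<Omega>"
    and mu: "0 < \<mu>" "\<mu> < n"
    and M_cont: "continuous_on {0..} M" and M_nonneg: "\<forall>t\<ge>0. M t \<ge> 0"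
    and M1: "\<forall>t\<ge>0. \<forall>r\<ge>0. Mhat (t + r) \<ge> Mhat t + Mhat r"
    and M2: "\<gamma> > 1" "\<forall>t1 t2. 0 < t1 \<longrightarrow> t1 \<le> t2 \<longrightarrow>
               M t2 / t2 powr (\<gamma> - 1) \<le> M t1 / t1 powr (\<gamma> - 1)"
    and M3: "\<forall>b>0. \<exists>\<kappa>>0. \<forall>t\<ge>b. \<kappa> \<le> M t"
    and g_cont: "continuous_on (closure \<Omega> \<times> UNIV) (\<lambda>(x, t). g x t)"
    and g1: "C1_on (\<lambda>(x, t). h x t) (closure \<Omega> \<times> UNIV)"
            "\<forall>x\<in>closure \<Omega>. \<forall>t\<le>0. h x t = 0"
            "\<forall>x\<in>closure \<Omega>. \<forall>t>0. h x t > 0"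
    and g2: "\<forall>\<epsilon>>0. ((\<lambda>t. SUP x\<in>closure \<Omega>. h x t * exp (- \<epsilon> * \<bar>t\<bar> powr (n / (n - s))))
                        \<longlongrightarrow> 0) at_top"
            "\<forall>\<epsilon>>0. filterlim (\<lambda>t. INF x\<in>closure \<Omega>. h x t * exp (\<epsilon> * \<bar>t\<bar> powr (n / (n - s))))
                        at_top at_top"
    and g3: "\<exists>t0>0. \<exists>T0>0. \<exists>\<gamma>0>0. \<forall>x\<in>\<Omega>. \<forall>t\<ge>t0.
               0 < t powr \<gamma>0 * G x t \<and> t powr \<gamma>0 * G x t \<le> T0 * g x t"
    and g4: "\<exists>l. l > \<gamma> * n / (2 * s) - 1 \<and>
               (\<forall>x\<in>closure \<Omega>. strict_mono_on {0<..} (\<lambda>t. g x t / t powr l))"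
    and sol: "weak_solution s \<mu> M g G \<Omega> u"
    and nontrivial: "\<not> (AE x in lebesgue. u x = 0)"
  shows "AE x in lebesgue. x \<in> \<Omega> \<longrightarrow> 0 \<le> u x"
proof -
  interpret L: sigma_finite_measure "lebesgue :: 'a measure" by (rule sf_lebesgue)
  interpret P: pair_sigma_finite "lebesgue :: 'a measure" "lebesgue :: 'a measure" ..
  note id_lebesgue[measurable]
  define p where "p = real DIM('a) / s"
  have p2: "p \<ge> 2" using s unfolding p_def n_def by simp
  have exp_eq: "real DIM('a) + s * (real DIM('a) / s) = 2 * real DIM('a)" using s by simp
  have ex2: "real DIM('a) + s * p = 2 * real DIM('a)" using exp_eq unfolding p_def .
  have uX: "u \<in> X0 s \<Omega>" using sol unfolding weak_solution_def by (rule conjunct1)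
  note eq = sol[unfolded weak_solution_def, THEN conjunct2]
  have u_meas[measurable]: "u \<in> borel_measurable lebesgue"
    and u_Lp: "(\<integral>\<^sup>+ x. ennreal (\<bar>u x\<bar> powr p) \<partial>lebesgue) < \<infinity>"
    and u_gag: "(\<integral>\<^sup>+ x. \<integral>\<^sup>+ y. ennreal (\<bar>u x - u y\<bar> powr p / norm (x - y) powr (2 * real DIM('a)))
         \<partial>lebesgue \<partial>lebesgue) < \<infinity>"
    and u_out: "AE x in lebesgue. x \<notin> \<Omega> \<longrightarrow> u x = 0"
  proof -
    have A: "(u \<in> borel_measurable lebesgue \<and>
     (\<integral>\<^sup>+ x. ennreal (\<bar>u x\<bar> powr (real DIM('a) / s)) \<partial>lebesgue) < \<infinity> \<and>
     (\<integral>\<^sup>+ x. \<integral>\<^sup>+ y. ennreal (\<bar>u x - u y\<bar> powr (real DIM('a) / s) / norm (x - y) powr (real DIM('a) + s * (real DIM('a) / s)))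
         \<partial>lebesgue \<partial>lebesgue) < \<infinity>) \<and> (AE x in lebesgue. x \<notin> \<Omega> \<longrightarrow> u x = 0)"
      using uX unfolding X0_def frac_sobolev_def mem_Collect_eq .
    then show "u \<in> borel_measurable lebesgue" 
      "(\<integral>\<^sup>+ x. ennreal (\<bar>u x\<bar> powr p) \<partial>lebesgue) < \<infinity>"
      "(\<integral>\<^sup>+ x. \<integral>\<^sup>+ y. ennreal (\<bar>u x - u y\<bar> powr p / norm (x - y) powr (2 * real DIM('a)))
         \<partial>lebesgue \<partial>lebesgue) < \<infinity>"
      "AE x in lebesgue. x \<notin> \<Omega> \<longrightarrow> u x = 0"
      unfolding exp_eq p_def by blast+
  qed
  define \<phi> where "\<phi> = (\<lambda>x. min (u x) 0)"
  have phi_meas[measurable]: "\<phi> \<in> borel_measurable lebesgue" unfolding \<phi>_def by measurable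
  have phiX: "\<phi> \<in> X0 s \<Omega>"
    unfolding X0_def frac_sobolev_def p_def[symmetric] unfolding ex2
  proof (intro CollectI conjI)
    show "\<phi> \<in> borel_measurable lebesgue" by measurable
    have "(\<integral>\<^sup>+ x. ennreal (\<bar>\<phi> x\<bar> powr p) \<partial>lebesgue) \<le> (\<integral>\<^sup>+ x. ennreal (\<bar>u x\<bar> powr p) \<partial>lebesgue)"
      using p2 by (intro nn_integral_mono ennreal_leI powr_mono2) (auto simp: \<phi>_def)
    then show "(\<integral>\<^sup>+ x. ennreal (\<bar>\<phi> x\<bar> powr p) \<partial>lebesgue) < \<infinity>" using u_Lp by (rule le_less_trans)
    have "(\<integral>\<^sup>+ x. \<integral>\<^sup>+ y. ennreal (\<bar>\<phi> x - \<phi> y\<bar> powr p / norm (x - y) powr (2 * real DIM('a)))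
         \<partial>lebesgue \<partial>lebesgue) \<le> (\<integral>\<^sup>+ x. \<integral>\<^sup>+ y. ennreal (\<bar>u x - u y\<bar> powr p / norm (x - y) powr (2 * real DIM('a)))
         \<partial>lebesgue \<partial>lebesgue)"
      unfolding \<phi>_def using p2
      by (intro nn_integral_mono ennreal_leI divide_right_mono powr_mono2 minpt(1)) auto
    then show "(\<integral>\<^sup>+ x. \<integral>\<^sup>+ y. ennreal (\<bar>\<phi> x - \<phi> y\<bar> powr p / norm (x - y) powr (2 * real DIM('a)))
         \<partial>lebesgue \<partial>lebesgue) < \<infinity>" using u_gag by (rule le_less_trans)
    show "AE x in lebesgue. x \<notin> \<Omega> \<longrightarrow> \<phi> x = 0"
      using u_out by (rule eventually_mono) (simp add: \<phi>_def)
  qed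
  define K where "K = (\<lambda>x y. \<bar>u x - u y\<bar> powr p / norm (x - y) powr (2 * real DIM('a)))"
  define F where "F = (\<lambda>z. case z of (x, y) \<Rightarrow>
      \<bar>u x - u y\<bar> powr (real DIM('a) / s - 2) * (u x - u y) * (\<phi> x - \<phi> y)
        / norm (x - y) powr (2 * real DIM('a)))"
  have K_meas[measurable]: "(\<lambda>(x, y). K x y) \<in> borel_measurable (lebesgue \<Otimes>\<^sub>M lebesgue)"
    unfolding K_def by (rule K_meas_lemma[OF u_meas])
  have F_meas[measurable]: "F \<in> borel_measurable (lebesgue \<Otimes>\<^sub>M lebesgue)"
    unfolding F_def \<phi>_def by (rule F_meas_lemma[OF u_meas])
  have Kpos: "K x y > 0" if "u x \<noteq> u y" "x \<noteq> y" for x y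
    using that unfolding K_def by simp
  have q0: "real DIM('a) / s - 2 \<ge> 0" using p2 unfolding p_def by simp
  have qp: "real DIM('a) / s - 2 + 2 = p" unfolding p_def by simp
  have F_nonneg: "F z \<ge> 0" for z
  proof (cases z)
    case (Pair x y)
    show ?thesis unfolding Pair F_def \<phi>_def prod.case
      by (rule Fpt(1)[OF q0]) simp
  qed
  have F_bound: "\<bar>F z\<bar> \<le> (case z of (x, y) \<Rightarrow> K x y)" for z
  proof (cases z)
    case (Pair x y)
    show ?thesis unfolding Pair F_def \<phi>_def K_def prod.case
      using Fpt(2)[OF q0, of "norm (x - y) powr (2 * real DIM('a))" "u x" "u y"] unfolding qp by simp
  qed
  have F_zero: "F (x, y) = 0 \<Longrightarrow> \<phi> x = \<phi> y" for x y
  proof (rule ccontr)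
    assume F0: "F (x, y) = 0" and ne: "\<phi> x \<noteq> \<phi> y"
    then have "x \<noteq> y" by auto
    then have Dp: "norm (x - y) powr (2 * real DIM('a)) > 0" by simp
    have "F (x, y) > 0" using Fpt(3)[OF q0 _ Dp, of "u x" "u y"] ne unfolding F_def \<phi>_def by simp
    then show False using F0 by simp
  qed
  have KQ: "(\<integral>\<^sup>+ z. ennreal (case z of (x, y) \<Rightarrow> K x y) \<partial>(lebesgue \<Otimes>\<^sub>M lebesgue))
      = (\<integral>\<^sup>+ x. \<integral>\<^sup>+ y. ennreal (K x y) \<partial>lebesgue \<partial>lebesgue)"
  proof -
    have m: "(\<lambda>z. ennreal (case z of (x, y) \<Rightarrow> K x y)) \<in> borel_measurable (lebesgue \<Otimes>\<^sub>M lebesgue)"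
      using K_meas by (rule measurable_compose) simp
    have "(\<integral>\<^sup>+ x. \<integral>\<^sup>+ y. ennreal (case (x, y) of (x, y) \<Rightarrow> K x y) \<partial>lebesgue \<partial>lebesgue)
        = (\<integral>\<^sup>+ z. ennreal (case z of (x, y) \<Rightarrow> K x y) \<partial>(lebesgue \<Otimes>\<^sub>M lebesgue))"
      by (rule L.nn_integral_fst[OF m])
    then show ?thesis by simp
  qed
  have F_int: "integrable (lebesgue \<Otimes>\<^sub>M lebesgue) F"
  proof (rule integrableI_bounded)
    show "F \<in> borel_measurable (lebesgue \<Otimes>\<^sub>M lebesgue)" by measurable
    have "(\<integral>\<^sup>+ z. ennreal (norm (F z)) \<partial>(lebesgue \<Otimes>\<^sub>M lebesgue))
        \<le> (\<integral>\<^sup>+ z. ennreal (case z of (x, y) \<Rightarrow> K x y) \<partial>(lebesgue \<Otimes>\<^sub>M lebesgue))"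
      using F_bound by (intro nn_integral_mono ennreal_leI) auto
    also have "\<dots> < \<infinity>" unfolding KQ using u_gag unfolding K_def .
    finally show "(\<integral>\<^sup>+ z. ennreal (norm (F z)) \<partial>(lebesgue \<Otimes>\<^sub>M lebesgue)) < \<infinity>" .
  qed
  define Q where "Q = (\<integral>\<^sup>+ x. \<integral>\<^sup>+ y. ennreal (K x y) \<partial>lebesgue \<partial>lebesgue)"
  have Qfin: "Q < \<infinity>" using u_gag unfolding Q_def K_def .
  have Qnz: "Q \<noteq> 0"
  proof
    assume "Q = 0"
    moreover have mK: "(\<lambda>x. \<integral>\<^sup>+ y. ennreal (K x y) \<partial>lebesgue) \<in> borel_measurable lebesgue"
      unfolding K_def by measurable
    ultimately have AE0: "AE x in lebesgue. (\<integral>\<^sup>+ y. ennreal (K x y) \<partial>lebesgue) = 0"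
      using nn_integral_0_iff_AE[OF mK] unfolding Q_def by simp
    have "AE x in lebesgue. AE y in lebesgue. u x = u y"
      using AE0
    proof (rule eventually_mono)
      fix x assume x: "(\<integral>\<^sup>+ y. ennreal (K x y) \<partial>lebesgue) = 0"
      have "(\<lambda>y. ennreal (K x y)) \<in> borel_measurable lebesgue" unfolding K_def by measurable
      from nn_integral_0_iff_AE[OF this] x have "AE y in lebesgue. ennreal (K x y) = 0" by simp
      then show "AE y in lebesgue. u x = u y"
        using AE_neq_lebesgue[of x]
      proof eventually_elim
        case (elim y)
        then show ?case using Kpos[of x y] by (auto simp: ennreal_eq_0_iff)
      qed
    qed
    from const_zero[OF this u_out dom(1)] nontrivial show False by simp
  qed
  have norm_pos: "X0_norm s u > 0"
  proof -
    have "enn2real Q > 0" using Qfin Qnz by (simp add: enn2real_positive_iff zero_less_iff_neq_zero)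
    moreover have "X0_norm s u = enn2real Q powr (s / real DIM('a))"
      unfolding X0_norm_def Q_def K_def p_def ..
    ultimately show ?thesis by simp
  qed
  define t where "t = X0_norm s u powr (real DIM('a) / s)"
  have "t > 0" unfolding t_def using norm_pos by simp
  then obtain \<kappa> where k1: "\<kappa> > 0" and k2: "\<forall>t'\<ge>t. \<kappa> \<le> M t'"
    using M3 by blast
  have Mt: "M t > 0" using k1 k2[rule_format, of t] by simp
  have gphi0: "g x (u x) * \<phi> x = 0" if "x \<in> \<Omega>" for x
  proof (cases "u x \<le> 0")
    case True
    have "x \<in> closure \<Omega>" using that closure_subset by blast
    then have "h x (u x) = 0" using g1(2) True by blast
    then show ?thesis unfolding g_def by simp
  next
    case False
    then show ?thesis unfolding \<phi>_def by simp
  qed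
  have RHS0: "(\<integral> x \<in> \<Omega>. (\<integral> y \<in> \<Omega>. G y (u y) / norm (x - y) powr \<mu> \<partial>lebesgue) * g x (u x) * \<phi> x
             \<partial>lebesgue) = 0"
  proof -
    have "(\<lambda>x. indicator \<Omega> x *\<^sub>R ((\<integral> y \<in> \<Omega>. G y (u y) / norm (x - y) powr \<mu> \<partial>lebesgue) * g x (u x) * \<phi> x))
        = (\<lambda>x. 0)"
    proof
      fix x show "indicator \<Omega> x *\<^sub>R ((\<integral> y \<in> \<Omega>. G y (u y) / norm (x - y) powr \<mu> \<partial>lebesgue) * g x (u x) * \<phi> x) = 0"
        using gphi0[of x] by (cases "x \<in> \<Omega>") (simp_all add: mult.assoc)
    qed
    then show ?thesis unfolding set_lebesgue_integral_def by simp
  qed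
  have e1: "M t * integral\<^sup>L (lebesgue \<Otimes>\<^sub>M lebesgue) F
      = (\<integral> x \<in> \<Omega>. (\<integral> y \<in> \<Omega>. G y (u y) / norm (x - y) powr \<mu> \<partial>lebesgue) * g x (u x) * \<phi> x
             \<partial>lebesgue)"
    unfolding t_def F_def by (rule eq[rule_format, OF phiX])
  have "integral\<^sup>L (lebesgue \<Otimes>\<^sub>M lebesgue) F = 0" using e1 RHS0 Mt by simp
  then have "AE z in lebesgue \<Otimes>\<^sub>M lebesgue. F z = 0"
    using integral_nonneg_eq_0_iff_AE[OF F_int] F_nonneg by simp
  then have "AE z in lebesgue \<Otimes>\<^sub>M lebesgue. \<phi> (fst z) = \<phi> (snd z)"
  proof (rule eventually_mono)
    fix z assume "F z = 0"
    then show "\<phi> (fst z) = \<phi> (snd z)" using F_zero[of "fst z" "snd z"] by simp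
  qed
  from P.AE_pair[OF this] have c1: "AE x in lebesgue. AE y in lebesgue. \<phi> x = \<phi> y"
    by simp
  have c2: "AE x in lebesgue. x \<notin> \<Omega> \<longrightarrow> \<phi> x = 0"
    using u_out by (rule eventually_mono) (simp add: \<phi>_def)
  have "AE x in lebesgue. \<phi> x = 0" by (rule const_zero[OF c1 c2 dom(1)])
  then show ?thesis by (rule eventually_mono) (auto simp: \<phi>_def min_def split: if_splits)
qed

end
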